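(* Let $P$ be the program $l(X)\leftarrow p(X),r(X).\quad p(X)\leftarrow q(X,Y),p(Y).\quad r(f(X))\leftarrow s(Y),r(X).\quad q(f(Z),Z).\quad p(0).\quad r(0).\quad s(0).$ There is no linear norm $\|\cdot\|$ and linear level mapping $|\cdot|$ such that for all terms $X,Y$: $|\mathit{solve}(p(X))| > |\mathit{solve}((q(X,Y),p(Y)))|$, $|\mathit{solve}(r(f(X)))| > |\mathit{solve}((s(Y),r(X)))|$, and $|\mathit{solve}((s(Y),r(X)))| > |\mathit{solve}(r(X))|$, where $>$ is the usual order on natural numbers and $(\cdot,\cdot)$ is the binary functor $,/2$.
   Context: A norm maps terms to natural numbers and a level mapping maps atoms to natural numbers. A norm is linear if for every functor $f$ of arity $n$ (constants having arity $0$) $\|f(t_1,\dots,t_n)\|=c^f+\sum_{i=1}^n a^f_i\|t_i\|$, and a level mapping is linear if for every predicate $p$ of arity $n$ $|p(t_1,\dots,t_n)|=c^p+\sum_{i=1}^n a^p_i\|t_i\|$ for a linear norm $\|\cdot\|$, where all coefficients $c^f,a^f_i,c^p,a^p_i$ are non-negative integers. Here the atoms $\mathit{solve}(t)$ are atoms of a unary predicate $\mathit{solve}$ whose argument is a term built from the predicate symbols of $P$ (treated as functors) and the binary functor $,/2$. *)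

theory Defs
  imports Main
begin

text \<open>A functor is identified by its name together with its arity (the length of
  the argument list).  Atoms are represented in the same way (predicate symbol
  applied to arguments); predicate symbols may also be used as functors.\<close>

datatype gterm = Fn string "gterm list"

definition linear_norm :: "(gterm \<Rightarrow> nat) \<Rightarrow> bool" where
  "linear_norm nrm \<longleftrightarrow>
     (\<exists>c :: string \<Rightarrow> nat \<Rightarrow> nat. \<exists>a :: string \<Rightarrow> nat \<Rightarrow> nat \<Rightarrow> nat.
        \<forall>f ts. nrm (Fn f ts) =
                c f (length ts) + (\<Sum>i<length ts. a f (length ts) i * nrm (ts ! i)))"

definition linear_level_mapping :: "(gterm \<Rightarrow> nat) \<Rightarrow> (gterm \<Rightarrow> nat) \<Rightarrow> bool" where
  "linear_level_mapping nrm lvl \<longleftrightarrow>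
     (\<exists>c :: string \<Rightarrow> nat \<Rightarrow> nat. \<exists>a :: string \<Rightarrow> nat \<Rightarrow> nat \<Rightarrow> nat.
        \<forall>p ts. lvl (Fn p ts) =
                c p (length ts) + (\<Sum>i<length ts. a p (length ts) i * nrm (ts ! i)))"

inductive_set prog_terms :: "gterm set" where
  zero: "Fn ''0'' [] \<in> prog_terms"
| succ: "t \<in> prog_terms \<Longrightarrow> Fn ''f'' [t] \<in> prog_terms"

definition solve :: "gterm \<Rightarrow> gterm" where
  "solve t = Fn ''solve'' [t]"

definition conj :: "gterm \<Rightarrow> gterm \<Rightarrow> gterm" where
  "conj s t = Fn '','' [s, t]"

end

theory Submission
  imports Defs
begin

theorem mainTheorem4:
  shows "\<not> (\<exists>nrm lvl. linear_norm nrm \<and> linear_level_mapping nrm lvl \<and>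
     (\<forall>X\<in>prog_terms. \<forall>Y\<in>prog_terms.
        lvl (solve (Fn ''p'' [X])) > lvl (solve (conj (Fn ''q'' [X, Y]) (Fn ''p'' [Y])))
      \<and> lvl (solve (Fn ''r'' [Fn ''f'' [X]])) > lvl (solve (conj (Fn ''s'' [Y]) (Fn ''r'' [X])))
      \<and> lvl (solve (conj (Fn ''s'' [Y]) (Fn ''r'' [X]))) > lvl (solve (Fn ''r'' [X]))))"
proof
  assume "\<exists>nrm lvl. linear_norm nrm \<and> linear_level_mapping nrm lvl \<and>
     (\<forall>X\<in>prog_terms. \<forall>Y\<in>prog_terms.
        lvl (solve (Fn ''p'' [X])) > lvl (solve (conj (Fn ''q'' [X, Y]) (Fn ''p'' [Y])))
      \<and> lvl (solve (Fn ''r'' [Fn ''f'' [X]])) > lvl (solve (conj (Fn ''s'' [Y]) (Fn ''r'' [X])))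
      \<and> lvl (solve (conj (Fn ''s'' [Y]) (Fn ''r'' [X]))) > lvl (solve (Fn ''r'' [X])))"
  then obtain nrm lvl where N: "linear_norm nrm" and L: "linear_level_mapping nrm lvl"
    and H: "\<forall>X\<in>prog_terms. \<forall>Y\<in>prog_terms.
        lvl (solve (Fn ''p'' [X])) > lvl (solve (conj (Fn ''q'' [X, Y]) (Fn ''p'' [Y])))
      \<and> lvl (solve (Fn ''r'' [Fn ''f'' [X]])) > lvl (solve (conj (Fn ''s'' [Y]) (Fn ''r'' [X])))
      \<and> lvl (solve (conj (Fn ''s'' [Y]) (Fn ''r'' [X]))) > lvl (solve (Fn ''r'' [X]))"
    by blast
  from N obtain c a where c: "\<And>f ts. nrm (Fn f ts) =
                c f (length ts) + (\<Sum>i<length ts. a f (length ts) i * nrm (ts ! i))"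
    unfolding linear_norm_def by blast
  from L obtain c' a' where c': "\<And>f ts. lvl (Fn f ts) =
                c' f (length ts) + (\<Sum>i<length ts. a' f (length ts) i * nrm (ts ! i))"
    unfolding linear_level_mapping_def by blast
  define C where "C = c' ''solve'' 1"
  define A where "A = a' ''solve'' 1 0"
  define k where "k = c '','' 2"
  define b1 where "b1 = a '','' 2 0"
  define b2 where "b2 = a '','' 2 1"
  have LS: "\<And>t. lvl (solve t) = C + A * nrm t"
    using c' unfolding solve_def C_def A_def by simp
  have NC: "\<And>u v. nrm (conj u v) = k + b1 * nrm u + b2 * nrm v"
    using c unfolding conj_def k_def b1_def b2_def by (simp add: numeral_2_eq_2)
  define z where "z = Fn ''0'' []"
  have z: "z \<in> prog_terms" unfolding z_def by (rule prog_terms.zero)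
  have fz: "Fn ''f'' [z] \<in> prog_terms" using z by (rule prog_terms.succ)
  have b2: "b2 = 0"
  proof (rule ccontr)
    assume "b2 \<noteq> 0"
    have "lvl (solve (Fn ''p'' [z])) > lvl (solve (conj (Fn ''q'' [z, z]) (Fn ''p'' [z])))"
      using H z by blast
    hence "A * nrm (Fn ''p'' [z]) > A * (k + b1 * nrm (Fn ''q'' [z, z]) + b2 * nrm (Fn ''p'' [z]))"
      unfolding LS NC by simp
    hence "nrm (Fn ''p'' [z]) > k + b1 * nrm (Fn ''q'' [z, z]) + b2 * nrm (Fn ''p'' [z])"
      by (meson mult_le_mono2 not_less)
    moreover have "b2 * nrm (Fn ''p'' [z]) \<ge> nrm (Fn ''p'' [z])" using \<open>b2 \<noteq> 0\<close> by simp
    ultimately show False by linarith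
  qed
  have 1: "lvl (solve (Fn ''r'' [Fn ''f'' [z]])) > lvl (solve (conj (Fn ''s'' [z]) (Fn ''r'' [z])))"
    using H z by blast
  have 2: "lvl (solve (conj (Fn ''s'' [z]) (Fn ''r'' [Fn ''f'' [z]]))) > lvl (solve (Fn ''r'' [Fn ''f'' [z]]))"
    using H z fz by blast
  show False using 1 2 unfolding LS NC b2 by simp
qed

end
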